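(* Let $X$ and $Y$ be topological spaces, $(Z,d)$ a metric space, $f:X\times Y\to Z$ a mapping, and $\mathcal B$ a countable collection of nonempty subsets of $Y$. Suppose that for every $V\in\mathcal B$ the set-valued mapping $F^V:X\ni x\mapsto f_x(V)\in 2^Z$ is lower quasicontinuous. Then there is a residual set $R\subset X$ such that for each $a\in R$: (1) if $f_a$ is continuous at $b\in Y$ and $b$ has a neighborhood base (in $Y$) contained in $\mathcal B$, then $f$ is continuous at $(a,b)$; (2) if $f_a$ is quasicontinuous at $b\in Y$ and some neighborhood $V'$ of $b$ in $Y$ has a pseudobase (as a subspace) contained in $\mathcal B$, then $f$ is quasicontinuous with respect to the variable $x$ at $(a,b)$; (3) if $f_a$ is cliquish at $b\in Y$ and some neighborhood $V'$ of $b$ in $Y$ has a pseudobase (as a subspace) contained in $\mathcal B$, then $f$ is cliquish with respect to the variable $x$ at $(a,b)$.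
   Context: $f_x(y)=f(x,y)$; $2^Z$ is the set of nonempty subsets of $Z$. $F:X\to 2^Z$ is lower quasicontinuous if for each $x_0\in X$, each neighborhood $U$ of $x_0$ and each open $W\subset Z$ with $F(x_0)\cap W\ne\emptyset$, there is an open $O$ with $\emptyset\ne O\subset U$ and $F(x)\cap W\ne\emptyset$ for all $x\in O$. A mapping $g:Y\to Z$ is quasicontinuous at $b$ if for each neighborhood $V$ of $b$ and neighborhood $W$ of $g(b)$ there is an open $O$ with $\emptyset\ne O\subset V$ and $g(O)\subset W$; it is cliquish at $b$ if for each $\varepsilon>0$ and neighborhood $V$ of $b$ there is an open $O$ with $\emptyset\ne O\subset V$ and $\mathrm{diam}(g(O))\le\varepsilon$. $f$ is quasicontinuous with respect to the variable $x$ at $(a,b)$ if for each neighborhood $V$ of $b$ and $\varepsilon>0$ there are a neighborhood $U$ of $a$ and an open $O\subset Y$ with $\emptyset\ne O\subset V$ such that $d(f(a,b),f(x,y))\le\varepsilon$ for all $x\in U$, $y\in O$; $f$ is cliquish with respect to the variable $x$ at $(a,b)$ if for each neighborhood $V$ of $b$ and $\varepsilon>0$ there are a neighborhood $U$ of $a$ and an open $O\subset Y$ with $\emptyset\ne O\subset V$ such that $d(f(a,y),f(x,y'))\le\varepsilon$ for all $x\in U$, $y,y'\in O$. A pseudobase ($\pi$-base) of a space is a collection of nonempty open sets such that every nonempty open set contains a member of it. Residual means containing a countable intersection of dense open sets. *)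

theory Defs
  imports "HOL-Analysis.Analysis"
begin

definition nhd :: "'a::topological_space set \<Rightarrow> 'a \<Rightarrow> bool" where
  "nhd U x \<longleftrightarrow> (\<exists>G. open G \<and> x \<in> G \<and> G \<subseteq> U)"

definition residual :: "'a::topological_space set \<Rightarrow> bool" where
  "residual R \<longleftrightarrow> (\<exists>G. countable G \<and> (\<forall>g\<in>G. open g \<and> closure g = UNIV) \<and> \<Inter>G \<subseteq> R)"

definition lower_quasicont :: "('a::topological_space \<Rightarrow> 'c::topological_space set) \<Rightarrow> bool" where
  "lower_quasicont F \<longleftrightarrow>
     (\<forall>x0 U W. nhd U x0 \<and> open W \<and> F x0 \<inter> W \<noteq> {} \<longrightarrow>
        (\<exists>G. open G \<and> G \<noteq> {} \<and> G \<subseteq> U \<and> (\<forall>x\<in>G. F x \<inter> W \<noteq> {})))"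

definition quasicont_at :: "('b::topological_space \<Rightarrow> 'c::topological_space) \<Rightarrow> 'b \<Rightarrow> bool" where
  "quasicont_at g b \<longleftrightarrow>
     (\<forall>V W. nhd V b \<and> nhd W (g b) \<longrightarrow>
        (\<exists>G. open G \<and> G \<noteq> {} \<and> G \<subseteq> V \<and> g ` G \<subseteq> W))"

text \<open>Cliquishness; "diam(g(O)) \<le> \<epsilon>" is written out as a bound on all distances.\<close>
definition cliquish_at :: "('b::topological_space \<Rightarrow> 'c::metric_space) \<Rightarrow> 'b \<Rightarrow> bool" where
  "cliquish_at g b \<longleftrightarrow>
     (\<forall>\<epsilon>>0. \<forall>V. nhd V b \<longrightarrow>
        (\<exists>G. open G \<and> G \<noteq> {} \<and> G \<subseteq> V \<and> (\<forall>y\<in>G. \<forall>y'\<in>G. dist (g y) (g y') \<le> \<epsilon>)))"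

definition quasicont_wrt_x ::
  "('a::topological_space \<times> 'b::topological_space \<Rightarrow> 'c::metric_space) \<Rightarrow> 'a \<Rightarrow> 'b \<Rightarrow> bool" where
  "quasicont_wrt_x f a b \<longleftrightarrow>
     (\<forall>V \<epsilon>. nhd V b \<and> \<epsilon> > 0 \<longrightarrow>
        (\<exists>U G. nhd U a \<and> open G \<and> G \<noteq> {} \<and> G \<subseteq> V \<and>
               (\<forall>x\<in>U. \<forall>y\<in>G. dist (f (a, b)) (f (x, y)) \<le> \<epsilon>)))"

definition cliquish_wrt_x ::
  "('a::topological_space \<times> 'b::topological_space \<Rightarrow> 'c::metric_space) \<Rightarrow> 'a \<Rightarrow> 'b \<Rightarrow> bool" where
  "cliquish_wrt_x f a b \<longleftrightarrow>
     (\<forall>V \<epsilon>. nhd V b \<and> \<epsilon> > 0 \<longrightarrow>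
        (\<exists>U G. nhd U a \<and> open G \<and> G \<noteq> {} \<and> G \<subseteq> V \<and>
               (\<forall>x\<in>U. \<forall>y\<in>G. \<forall>y'\<in>G. dist (f (a, y)) (f (x, y')) \<le> \<epsilon>)))"

definition has_nhd_base_in :: "'b::topological_space \<Rightarrow> 'b set set \<Rightarrow> bool" where
  "has_nhd_base_in b B \<longleftrightarrow>
     (\<exists>N\<subseteq>B. (\<forall>V\<in>N. nhd V b) \<and> (\<forall>U. nhd U b \<longrightarrow> (\<exists>V\<in>N. V \<subseteq> U)))"

definition pseudobase_of :: "'b::topological_space set set \<Rightarrow> 'b set \<Rightarrow> bool" where
  "pseudobase_of P S \<longleftrightarrow>
     (\<forall>W\<in>P. W \<noteq> {} \<and> openin (top_of_set S) W) \<and>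
     (\<forall>W. openin (top_of_set S) W \<and> W \<noteq> {} \<longrightarrow> (\<exists>P'\<in>P. P' \<subseteq> W))"

end

theory Submission
  imports Defs
begin


definition bad :: "('a::topological_space \<times> 'b \<Rightarrow> 'c::metric_space) \<Rightarrow> 'b set \<Rightarrow> real \<Rightarrow> 'a set" where
  "bad f V e = {a. (\<forall>y\<in>V. \<forall>y'\<in>V. dist (f (a,y)) (f (a,y')) \<le> e) \<and>
     (\<forall>U. open U \<and> a \<in> U \<longrightarrow> (\<exists>x\<in>U. \<exists>y\<in>V. \<forall>y'\<in>V. 5*e < dist (f (x,y)) (f (a,y'))))}"

lemma lqc_step:
  assumes "lower_quasicont (\<lambda>x. (\<lambda>y. f (x, y)) ` V)" "open G" "x0 \<in> G" "y0 \<in> V" "e > 0"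
  shows "\<exists>G'. open G' \<and> G' \<noteq> {} \<and> G' \<subseteq> G \<and> (\<forall>x\<in>G'. \<exists>y\<in>V. dist (f (x0,y0)) (f (x,y)) < e)"
proof -
  have H: "\<And>x0 U W. nhd U x0 \<Longrightarrow> open W \<Longrightarrow> (\<lambda>y. f (x0, y)) ` V \<inter> W \<noteq> {} \<Longrightarrow>
     (\<exists>G. open G \<and> G \<noteq> {} \<and> G \<subseteq> U \<and> (\<forall>x\<in>G. (\<lambda>y. f (x, y)) ` V \<inter> W \<noteq> {}))"
  proof -
    fix x0 U W assume a: "nhd U x0" "open W" "(\<lambda>y. f (x0, y)) ` V \<inter> W \<noteq> {}"
    have "nhd U x0 \<and> open W \<and> (\<lambda>y. f (x0, y)) ` V \<inter> W \<noteq> {} \<longrightarrow>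
     (\<exists>G. open G \<and> G \<noteq> {} \<and> G \<subseteq> U \<and> (\<forall>x\<in>G. (\<lambda>y. f (x, y)) ` V \<inter> W \<noteq> {}))"
      using assms(1)[unfolded lower_quasicont_def] by (rule spec[where x=W, OF spec[where x=U, OF spec[where x=x0]]])
    then show "\<exists>G. open G \<and> G \<noteq> {} \<and> G \<subseteq> U \<and> (\<forall>x\<in>G. (\<lambda>y. f (x, y)) ` V \<inter> W \<noteq> {})"
      using a by blast
  qed
  have "nhd G x0" using assms(2,3) unfolding nhd_def by blast
  moreover have "(\<lambda>y. f (x0, y)) ` V \<inter> ball (f (x0,y0)) e \<noteq> {}" using assms(4,5) by auto
  ultimately obtain G' where G': "open G'" "G' \<noteq> {}" "G' \<subseteq> G"
     "\<forall>x\<in>G'. (\<lambda>y. f (x, y)) ` V \<inter> ball (f (x0,y0)) e \<noteq> {}"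
    using H[of G x0 "ball (f (x0,y0)) e"] open_ball by blast
  have "\<forall>x\<in>G'. \<exists>y\<in>V. dist (f (x0,y0)) (f (x,y)) < e"
  proof
    fix x assume "x \<in> G'"
    then obtain z where "z \<in> (\<lambda>y. f (x, y)) ` V" "z \<in> ball (f (x0,y0)) e" using G'(4) by blast
    then show "\<exists>y\<in>V. dist (f (x0,y0)) (f (x,y)) < e" by auto
  qed
  then show ?thesis using G' by blast
qed

lemma meets_bad:
  assumes "open G" "G \<noteq> {}" "G \<subseteq> interior (closure S)"
  shows "G \<inter> S \<noteq> {}"
  using assms interior_subset open_Int_closure_eq_empty by blast

lemma bad_nowhere:
  assumes lqc: "lower_quasicont (\<lambda>x. (\<lambda>y. f (x, y)) ` V)" and ne: "V \<noteq> {}" and e: "e > 0"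
  shows "interior (closure (bad f V e)) = {}"
proof (rule ccontr)
  let ?H = "interior (closure (bad f V e))"
  assume "?H \<noteq> {}"
  then obtain x0 where x0: "x0 \<in> ?H" by blast
  obtain y0 where y0: "y0 \<in> V" using ne by blast
  obtain G1 where G1: "open G1" "G1 \<noteq> {}" "G1 \<subseteq> ?H" and G1c: "\<forall>x\<in>G1. \<exists>y\<in>V. dist (f (x0,y0)) (f (x,y)) < e"
    using lqc_step[OF lqc open_interior x0 y0 e] by blast
  obtain a2 where a2: "a2 \<in> G1" "a2 \<in> bad f V e" using meets_bad[OF G1] by blast
  then obtain x2 y2 where x2: "x2 \<in> G1" "y2 \<in> V" and far: "\<forall>y'\<in>V. 5*e < dist (f (x2,y2)) (f (a2,y'))"
    unfolding bad_def using G1(1) by blast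
  obtain G2 where G2: "open G2" "G2 \<noteq> {}" "G2 \<subseteq> G1" and G2c: "\<forall>x\<in>G2. \<exists>y\<in>V. dist (f (x2,y2)) (f (x,y)) < e"
    using lqc_step[OF lqc G1(1) x2 e] by blast
  have "G2 \<subseteq> ?H" using G2 G1 by blast
  then obtain a3 where a3: "a3 \<in> G2" "a3 \<in> bad f V e" using meets_bad[OF G2(1,2)] by blast
  obtain w where w: "w \<in> V" "dist (f (x0,y0)) (f (a2,w)) < e" using G1c a2 by blast
  obtain p where p: "p \<in> V" "dist (f (x0,y0)) (f (a3,p)) < e" using G1c a3 G2 by blast
  obtain q where q: "q \<in> V" "dist (f (x2,y2)) (f (a3,q)) < e" using G2c a3 by blast
  have pq: "dist (f (a3,p)) (f (a3,q)) \<le> e" using a3 p q unfolding bad_def by blast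
  have t1: "dist (f (x2,y2)) (f (a2,w)) \<le> dist (f (x2,y2)) (f (a3,q)) + dist (f (a3,q)) (f (a2,w))"
    by (rule dist_triangle)
  have t2: "dist (f (a3,q)) (f (a2,w)) \<le> dist (f (a3,q)) (f (a3,p)) + dist (f (a3,p)) (f (a2,w))"
    by (rule dist_triangle)
  have t3: "dist (f (a3,p)) (f (a2,w)) \<le> dist (f (a3,p)) (f (x0,y0)) + dist (f (x0,y0)) (f (a2,w))"
    by (rule dist_triangle)
  have "dist (f (x2,y2)) (f (a2,w)) \<le> dist (f (x2,y2)) (f (a3,q)) + dist (f (a3,q)) (f (a3,p))
      + dist (f (a3,p)) (f (x0,y0)) + dist (f (x0,y0)) (f (a2,w))"
    using t1 t2 t3 by linarith
  also have "\<dots> < 4*e" using q pq p w by (simp add: dist_commute)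
  finally have "dist (f (x2,y2)) (f (a2,w)) < 4*e" .
  moreover have "5*e < dist (f (x2,y2)) (f (a2,w))" using far w(1) by blast
  ultimately show False using e by linarith
qed



lemma residual_good:
  assumes "countable B" "\<forall>V\<in>B. V \<noteq> {}" "\<forall>V\<in>B. lower_quasicont (\<lambda>x. (\<lambda>y. f (x, y)) ` V)"
  shows "\<exists>R. residual R \<and> (\<forall>a\<in>R. \<forall>V\<in>B. \<forall>n. a \<notin> bad f V (inverse (real (Suc n))))"
proof -
  define G where "G = (\<lambda>(V,n). - closure (bad f V (inverse (real (Suc n))))) ` (B \<times> (UNIV::nat set))"
  have "countable G" unfolding G_def using assms(1) by auto
  moreover have "\<forall>g\<in>G. open g \<and> closure g = UNIV"
  proof
    fix g assume "g \<in> G"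
    then obtain V n where Vn: "V \<in> B" "g = - closure (bad f V (inverse (real (Suc n))))"
      unfolding G_def by auto
    have "interior (closure (bad f V (inverse (real (Suc n))))) = {}"
      by (rule bad_nowhere) (use assms(2,3) Vn(1) in auto)
    then show "open g \<and> closure g = UNIV" using Vn(2) closure_complement by auto
  qed
  moreover have "\<forall>a\<in>\<Inter>G. \<forall>V\<in>B. \<forall>n. a \<notin> bad f V (inverse (real (Suc n)))"
  proof (intro ballI allI)
    fix a V n assume "a \<in> \<Inter>G" "V \<in> B"
    then have "a \<in> - closure (bad f V (inverse (real (Suc n))))" unfolding G_def by blast
    then show "a \<notin> bad f V (inverse (real (Suc n)))" using closure_subset by blast
  qed
  ultimately show ?thesis unfolding residual_def by blast
qed

definition goodpt where
  "goodpt f B a \<longleftrightarrow> (\<forall>\<epsilon>>0. \<exists>e>0. e \<le> \<epsilon> \<and> (\<forall>V\<in>B. (\<forall>y\<in>V. \<forall>y'\<in>V. dist (f(a,y)) (f(a,y')) \<le> e) \<longrightarrow>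
     (\<exists>U. open U \<and> a\<in>U \<and> (\<forall>x\<in>U. \<forall>y\<in>V. \<exists>y'\<in>V. dist (f(x,y)) (f(a,y')) \<le> 5*e))))"

lemma goodpt_I:
  assumes "\<forall>V\<in>B. \<forall>n. a \<notin> bad f V (inverse (real (Suc n)))"
  shows "goodpt f B a"
  unfolding goodpt_def
proof (intro allI impI)
  fix \<epsilon>::real assume "\<epsilon> > 0"
  then obtain n where n: "n > 0" "inverse (real n) < \<epsilon>" using ex_inverse_of_nat_less by blast
  then obtain m where m: "n = Suc m" using not0_implies_Suc by blast
  let ?e = "inverse (real (Suc m))"
  have "\<forall>V\<in>B. (\<forall>y\<in>V. \<forall>y'\<in>V. dist (f(a,y)) (f(a,y')) \<le> ?e) \<longrightarrow>
     (\<exists>U. open U \<and> a\<in>U \<and> (\<forall>x\<in>U. \<forall>y\<in>V. \<exists>y'\<in>V. dist (f(x,y)) (f(a,y')) \<le> 5*?e))"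
  proof (intro ballI impI)
    fix V assume V: "V \<in> B" and d: "\<forall>y\<in>V. \<forall>y'\<in>V. dist (f(a,y)) (f(a,y')) \<le> ?e"
    have "a \<notin> bad f V ?e" using assms V by blast
    then obtain U where "open U" "a \<in> U" "\<not> (\<exists>x\<in>U. \<exists>y\<in>V. \<forall>y'\<in>V. 5*?e < dist (f (x,y)) (f (a,y')))"
      using d unfolding bad_def by blast
    then show "\<exists>U. open U \<and> a\<in>U \<and> (\<forall>x\<in>U. \<forall>y\<in>V. \<exists>y'\<in>V. dist (f(x,y)) (f(a,y')) \<le> 5*?e)"
      by (meson not_less)
  qed
  then show "\<exists>e>0. e \<le> \<epsilon> \<and> (\<forall>V\<in>B. (\<forall>y\<in>V. \<forall>y'\<in>V. dist (f(a,y)) (f(a,y')) \<le> e) \<longrightarrow>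
     (\<exists>U. open U \<and> a\<in>U \<and> (\<forall>x\<in>U. \<forall>y\<in>V. \<exists>y'\<in>V. dist (f(x,y)) (f(a,y')) \<le> 5*e)))"
    using n m by (intro exI[of _ ?e]) auto
qed



lemma goodpt_D:
  assumes "goodpt f B a" "\<epsilon> > 0"
  obtains e where "e > 0" "e \<le> \<epsilon>" "\<forall>V\<in>B. (\<forall>y\<in>V. \<forall>y'\<in>V. dist (f(a,y)) (f(a,y')) \<le> e) \<longrightarrow>
     (\<exists>U. open U \<and> a\<in>U \<and> (\<forall>x\<in>U. \<forall>y\<in>V. \<exists>y'\<in>V. dist (f(x,y)) (f(a,y')) \<le> 5*e))"
proof -
  have "\<exists>e>0. e \<le> \<epsilon> \<and> (\<forall>V\<in>B. (\<forall>y\<in>V. \<forall>y'\<in>V. dist (f(a,y)) (f(a,y')) \<le> e) \<longrightarrow>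
     (\<exists>U. open U \<and> a\<in>U \<and> (\<forall>x\<in>U. \<forall>y\<in>V. \<exists>y'\<in>V. dist (f(x,y)) (f(a,y')) \<le> 5*e)))"
    using assms(1)[unfolded goodpt_def, rule_format, OF assms(2)] .
  then show ?thesis using that by metis
qed

lemma part_cont:
  fixes f :: "'a::topological_space \<times> 'b::topological_space \<Rightarrow> 'c::metric_space"
  assumes good: "goodpt f B a" and cont: "((\<lambda>y. f (a, y)) \<longlongrightarrow> f (a, b)) (at b)"
    and base: "has_nhd_base_in b B"
  shows "(f \<longlongrightarrow> f (a, b)) (at (a, b))"
proof (rule tendstoI)
  fix \<epsilon>::real assume "\<epsilon> > 0"
  then have pos: "\<epsilon>/7 > 0" by simp
  obtain e where e: "e > 0" "e \<le> \<epsilon>/7" and ge: "\<forall>V\<in>B. (\<forall>y\<in>V. \<forall>y'\<in>V. dist (f(a,y)) (f(a,y')) \<le> e) \<longrightarrow>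
     (\<exists>U. open U \<and> a\<in>U \<and> (\<forall>x\<in>U. \<forall>y\<in>V. \<exists>y'\<in>V. dist (f(x,y)) (f(a,y')) \<le> 5*e))"
    by (rule goodpt_D[OF good pos])
  have e2: "e/2 > 0" using e by simp
  have "eventually (\<lambda>y. dist (f(a,y)) (f(a,b)) < e/2) (at b)" by (rule tendstoD[OF cont e2])
  then obtain S where S: "open S" "b \<in> S" "\<forall>y\<in>S. y \<noteq> b \<longrightarrow> dist (f(a,y)) (f(a,b)) < e/2"
    unfolding eventually_at_topological by blast
  have S2: "\<forall>y\<in>S. dist (f(a,y)) (f(a,b)) < e/2" using S(3) e by auto
  have "nhd S b" using S unfolding nhd_def by blast
  then obtain V where V: "V \<in> B" "nhd V b" "V \<subseteq> S" using base unfolding has_nhd_base_in_def by blast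
  have diam: "\<forall>y\<in>V. \<forall>y'\<in>V. dist (f(a,y)) (f(a,y')) \<le> e"
  proof (intro ballI)
    fix y y' assume "y \<in> V" "y' \<in> V"
    then have "dist (f(a,y)) (f(a,b)) < e/2" "dist (f(a,y')) (f(a,b)) < e/2" using S2 V(3) by auto
    moreover have "dist (f(a,y)) (f(a,y')) \<le> dist (f(a,y)) (f(a,b)) + dist (f(a,y')) (f(a,b))"
      by (rule dist_triangle2)
    ultimately show "dist (f(a,y)) (f(a,y')) \<le> e" by linarith
  qed
  then obtain U where U: "open U" "a \<in> U" "\<forall>x\<in>U. \<forall>y\<in>V. \<exists>y'\<in>V. dist (f(x,y)) (f(a,y')) \<le> 5*e"
    using mp[OF bspec[OF ge V(1)] diam] by blast
  obtain Gv where Gv: "open Gv" "b \<in> Gv" "Gv \<subseteq> V" using V(2) unfolding nhd_def by blast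
  show "eventually (\<lambda>p. dist (f p) (f (a,b)) < \<epsilon>) (at (a,b))"
    unfolding eventually_at_topological
  proof (intro exI[of _ "U \<times> Gv"] conjI ballI impI)
    show "open (U \<times> Gv)" using U Gv by (simp add: open_Times)
    show "(a,b) \<in> U \<times> Gv" using U Gv by simp
    fix p assume "p \<in> U \<times> Gv" "p \<noteq> (a,b)"
    then obtain x y where p: "p = (x,y)" "x \<in> U" "y \<in> V" using Gv by auto
    then obtain y' where y': "y' \<in> V" "dist (f(x,y)) (f(a,y')) \<le> 5*e" using bspec[OF bspec[OF U(3) p(2)] p(3)] by blast
    have "dist (f(a,y')) (f(a,b)) < e/2" using S2 V(3) y' by auto
    moreover have "dist (f(x,y)) (f(a,b)) \<le> dist (f(x,y)) (f(a,y')) + dist (f(a,y')) (f(a,b))"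
      by (rule dist_triangle)
    ultimately show "dist (f p) (f (a,b)) < \<epsilon>" using y' e p(1) by simp
  qed
qed

lemma pseudo_open:
  assumes "pseudobase_of P V'" "open G0" "G0 \<subseteq> V'" "G0 \<noteq> {}"
  obtains P' where "P' \<in> P" "P' \<subseteq> G0" "P' \<noteq> {}" "open P'"
proof -
  have "openin (top_of_set V') G0" unfolding openin_open using assms(2,3) by blast
  then obtain P' where P': "P' \<in> P" "P' \<subseteq> G0" using assms(1,4) unfolding pseudobase_of_def by blast
  then have ne: "P' \<noteq> {}" and "openin (top_of_set V') P'" using assms(1) unfolding pseudobase_of_def by auto
  then obtain T where T: "open T" "P' = V' \<inter> T" unfolding openin_open by blast
  have "P' = G0 \<inter> T" using T P'(2) assms(3) by blast
  then have "open P'" using T assms(2) by auto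
  then show ?thesis using that P' ne by blast
qed

lemma nhd_Int: assumes "nhd A b" "nhd C b" shows "nhd (A \<inter> C) b"
proof -
  obtain G1 where "open G1" "b \<in> G1" "G1 \<subseteq> A" using assms(1) unfolding nhd_def by blast
  moreover obtain G2 where "open G2" "b \<in> G2" "G2 \<subseteq> C" using assms(2) unfolding nhd_def by blast
  ultimately show ?thesis unfolding nhd_def by (intro exI[of _ "G1 \<inter> G2"]) auto
qed

lemma part_qc:
  fixes f :: "'a::topological_space \<times> 'b::topological_space \<Rightarrow> 'c::metric_space"
  assumes good: "goodpt f B a" and qc: "quasicont_at (\<lambda>y. f (a, y)) b"
    and V': "nhd V' b" "P \<subseteq> B" "pseudobase_of P V'"
  shows "quasicont_wrt_x f a b"
  unfolding quasicont_wrt_x_def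
proof (intro allI impI, elim conjE)
  fix V and \<epsilon>::real assume V: "nhd V b" and "\<epsilon> > 0"
  then have pos: "\<epsilon>/7 > 0" by simp
  obtain e where e: "e > 0" "e \<le> \<epsilon>/7" and ge: "\<forall>V\<in>B. (\<forall>y\<in>V. \<forall>y'\<in>V. dist (f(a,y)) (f(a,y')) \<le> e) \<longrightarrow>
     (\<exists>U. open U \<and> a\<in>U \<and> (\<forall>x\<in>U. \<forall>y\<in>V. \<exists>y'\<in>V. dist (f(x,y)) (f(a,y')) \<le> 5*e))"
    by (rule goodpt_D[OF good pos])
  have "nhd (V \<inter> V') b" using V V'(1) by (rule nhd_Int)
  moreover have "nhd (ball (f(a,b)) (e/2)) (f(a,b))" unfolding nhd_def using e
    by (intro exI[of _ "ball (f(a,b)) (e/2)"]) auto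
  ultimately have nn: "nhd (V \<inter> V') b \<and> nhd (ball (f(a,b)) (e/2)) (f(a,b))" by blast
  have "nhd (V \<inter> V') b \<and> nhd (ball (f(a,b)) (e/2)) ((\<lambda>y. f (a, y)) b) \<longrightarrow>
        (\<exists>G. open G \<and> G \<noteq> {} \<and> G \<subseteq> V \<inter> V' \<and> (\<lambda>y. f (a, y)) ` G \<subseteq> ball (f(a,b)) (e/2))"
    using qc unfolding quasicont_at_def by (rule spec[where x="ball (f(a,b)) (e/2)", OF spec[where x="V \<inter> V'"]])
  then obtain G0 where G0: "open G0" "G0 \<noteq> {}" "G0 \<subseteq> V \<inter> V'"
      "(\<lambda>y. f (a, y)) ` G0 \<subseteq> ball (f(a,b)) (e/2)"
    using nn by auto
  obtain P' where P': "P' \<in> P" "P' \<subseteq> G0" "P' \<noteq> {}" "open P'"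
    using pseudo_open[OF V'(3) G0(1) _ G0(2)] G0(3) by blast
  have PB: "P' \<in> B" using P'(1) V'(2) by blast
  have cl: "\<forall>y\<in>P'. dist (f(a,b)) (f(a,y)) < e/2" using G0(4) P'(2) by (auto simp: subset_iff)
  have dP: "\<forall>y\<in>P'. \<forall>y'\<in>P'. dist (f(a,y)) (f(a,y')) \<le> e"
  proof (intro ballI)
    fix y y' assume "y \<in> P'" "y' \<in> P'"
    then have "dist (f(a,b)) (f(a,y)) < e/2" "dist (f(a,b)) (f(a,y')) < e/2" using cl by auto
    moreover have "dist (f(a,y)) (f(a,y')) \<le> dist (f(a,b)) (f(a,y)) + dist (f(a,b)) (f(a,y'))"
      by (rule dist_triangle3)
    ultimately show "dist (f(a,y)) (f(a,y')) \<le> e" by linarith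
  qed
  then obtain U where U: "open U" "a \<in> U" "\<forall>x\<in>U. \<forall>y\<in>P'. \<exists>y'\<in>P'. dist (f(x,y)) (f(a,y')) \<le> 5*e"
    using mp[OF bspec[OF ge PB] dP] by blast
  show "\<exists>U G. nhd U a \<and> open G \<and> G \<noteq> {} \<and> G \<subseteq> V \<and>
               (\<forall>x\<in>U. \<forall>y\<in>G. dist (f (a, b)) (f (x, y)) \<le> \<epsilon>)"
  proof (intro exI[of _ U] exI[of _ P'] conjI ballI)
    show "nhd U a" using U unfolding nhd_def by blast
    show "open P'" "P' \<noteq> {}" using P' by auto
    show "P' \<subseteq> V" using P'(2) G0(3) by blast
    fix x y assume "x \<in> U" "y \<in> P'"
    then obtain y' where y': "y' \<in> P'" "dist (f(x,y)) (f(a,y')) \<le> 5*e" using U by blast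
    have "dist (f(a,b)) (f(a,y')) < e/2" using cl y' by auto
    moreover have "dist (f(a,b)) (f(x,y)) \<le> dist (f(a,b)) (f(a,y')) + dist (f(x,y)) (f(a,y'))"
      by (rule dist_triangle2)
    ultimately show "dist (f (a, b)) (f (x, y)) \<le> \<epsilon>" using y' e by linarith
  qed
qed

lemma part_cl:
  fixes f :: "'a::topological_space \<times> 'b::topological_space \<Rightarrow> 'c::metric_space"
  assumes good: "goodpt f B a" and cq: "cliquish_at (\<lambda>y. f (a, y)) b"
    and V': "nhd V' b" "P \<subseteq> B" "pseudobase_of P V'"
  shows "cliquish_wrt_x f a b"
  unfolding cliquish_wrt_x_def
proof (intro allI impI, elim conjE)
  fix V and \<epsilon>::real assume V: "nhd V b" and "\<epsilon> > 0"
  then have pos: "\<epsilon>/7 > 0" by simp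
  obtain e where e: "e > 0" "e \<le> \<epsilon>/7" and ge: "\<forall>V\<in>B. (\<forall>y\<in>V. \<forall>y'\<in>V. dist (f(a,y)) (f(a,y')) \<le> e) \<longrightarrow>
     (\<exists>U. open U \<and> a\<in>U \<and> (\<forall>x\<in>U. \<forall>y\<in>V. \<exists>y'\<in>V. dist (f(x,y)) (f(a,y')) \<le> 5*e))"
    by (rule goodpt_D[OF good pos])
  have "nhd (V \<inter> V') b" using V V'(1) by (rule nhd_Int)
  moreover have "nhd (V \<inter> V') b \<longrightarrow> (\<exists>G. open G \<and> G \<noteq> {} \<and> G \<subseteq> V \<inter> V' \<and>
      (\<forall>y\<in>G. \<forall>y'\<in>G. dist (f (a, y)) (f (a, y')) \<le> e))"
    using cq e(1) unfolding cliquish_at_def by (metis (no_types, lifting))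
  ultimately obtain G0 where G0: "open G0" "G0 \<noteq> {}" "G0 \<subseteq> V \<inter> V'"
      "\<forall>y\<in>G0. \<forall>y'\<in>G0. dist (f (a, y)) (f (a, y')) \<le> e"
    by blast
  obtain P' where P': "P' \<in> P" "P' \<subseteq> G0" "P' \<noteq> {}" "open P'"
    using pseudo_open[OF V'(3) G0(1) _ G0(2)] G0(3) by blast
  have PB: "P' \<in> B" using P'(1) V'(2) by blast
  have dP: "\<forall>y\<in>P'. \<forall>y'\<in>P'. dist (f(a,y)) (f(a,y')) \<le> e" using G0(4) P'(2) by blast
  then obtain U where U: "open U" "a \<in> U" "\<forall>x\<in>U. \<forall>y\<in>P'. \<exists>y'\<in>P'. dist (f(x,y)) (f(a,y')) \<le> 5*e"
    using mp[OF bspec[OF ge PB] dP] by blast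
  show "\<exists>U G. nhd U a \<and> open G \<and> G \<noteq> {} \<and> G \<subseteq> V \<and>
               (\<forall>x\<in>U. \<forall>y\<in>G. \<forall>y'\<in>G. dist (f (a, y)) (f (x, y')) \<le> \<epsilon>)"
  proof (intro exI[of _ U] exI[of _ P'] conjI ballI)
    show "nhd U a" using U unfolding nhd_def by blast
    show "open P'" "P' \<noteq> {}" using P' by auto
    show "P' \<subseteq> V" using P'(2) G0(3) by blast
    fix x y y' assume "x \<in> U" "y \<in> P'" "y' \<in> P'"
    then obtain w where w: "w \<in> P'" "dist (f(x,y')) (f(a,w)) \<le> 5*e" using U by blast
    have "dist (f(a,y)) (f(a,w)) \<le> e" using dP w(1) \<open>y \<in> P'\<close> by blast
    moreover have "dist (f(a,y)) (f(x,y')) \<le> dist (f(a,y)) (f(a,w)) + dist (f(x,y')) (f(a,w))"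
      by (rule dist_triangle2)
    ultimately show "dist (f (a, y)) (f (x, y')) \<le> \<epsilon>" using w e by linarith
  qed
qed


theorem theorem3p3:
  fixes f :: "'a::topological_space \<times> 'b::topological_space \<Rightarrow> 'c::metric_space"
    and B :: "'b set set"
  assumes "countable B"
    and "\<forall>V\<in>B. V \<noteq> {}"
    and "\<forall>V\<in>B. lower_quasicont (\<lambda>x. (\<lambda>y. f (x, y)) ` V)"
  shows "\<exists>R. residual R \<and>
    (\<forall>a\<in>R.
      (\<forall>b. ((\<lambda>y. f (a, y)) \<longlongrightarrow> f (a, b)) (at b) \<and> has_nhd_base_in b B \<longrightarrow> (f \<longlongrightarrow> f (a, b)) (at (a, b))) \<and>
      (\<forall>b. quasicont_at (\<lambda>y. f (a, y)) b \<and>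
           (\<exists>V' P. nhd V' b \<and> P \<subseteq> B \<and> pseudobase_of P V') \<longrightarrow> quasicont_wrt_x f a b) \<and>
      (\<forall>b. cliquish_at (\<lambda>y. f (a, y)) b \<and>
           (\<exists>V' P. nhd V' b \<and> P \<subseteq> B \<and> pseudobase_of P V') \<longrightarrow> cliquish_wrt_x f a b))"
proof -
  obtain R where R: "residual R" "\<forall>a\<in>R. \<forall>V\<in>B. \<forall>n. a \<notin> bad f V (inverse (real (Suc n)))"
    using residual_good[OF assms] by blast
  have g: "goodpt f B a" if "a \<in> R" for a
    by (rule goodpt_I) (rule bspec[OF R(2) that])
  show ?thesis
  proof (intro exI[of _ R] conjI ballI allI impI)
    show "residual R" by (rule R(1))
  next
    fix a b assume a: "a \<in> R" and h: "((\<lambda>y. f (a, y)) \<longlongrightarrow> f (a, b)) (at b) \<and> has_nhd_base_in b B"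
    show "(f \<longlongrightarrow> f (a, b)) (at (a, b))" using h by (intro part_cont[OF g[OF a]]) auto
  next
    fix a b assume a: "a \<in> R" and h: "quasicont_at (\<lambda>y. f (a, y)) b \<and>
           (\<exists>V' P. nhd V' b \<and> P \<subseteq> B \<and> pseudobase_of P V')"
    then obtain V' P where VP: "nhd V' b" "P \<subseteq> B" "pseudobase_of P V'" by blast
    show "quasicont_wrt_x f a b" using h VP by (intro part_qc[OF g[OF a]]) auto
  next
    fix a b assume a: "a \<in> R" and h: "cliquish_at (\<lambda>y. f (a, y)) b \<and>
           (\<exists>V' P. nhd V' b \<and> P \<subseteq> B \<and> pseudobase_of P V')"
    then obtain V' P where VP: "nhd V' b" "P \<subseteq> B" "pseudobase_of P V'" by blast
    show "cliquish_wrt_x f a b" using h VP by (intro part_cl[OF g[OF a]]) auto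
  qed
qed

end
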